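(* Let $t_1<\dots<t_N$, $q_1,\dots,q_N\ge0$, and let $\tau$ be the distribution of an offer profile subject to $((q_1,\dots,q_N),(t_1,\dots,t_N))$ (so in particular $\tau(\mathbb R)=\sum_k q_k$ and $\int t\,d\tau(t)=\sum_k q_kt_k$). Then the recursive procedure $FEASIBLE((q_1,\dots,q_N),(t_1,\dots,t_N),\tau)$ always stops, i.e. it terminates after finitely many recursive calls.
   Context: Drivers form a measure space $(I,di)$ of total mass $\sum_k q_k$; an offer profile subject to $(\mathbf q,\mathbf t)$ is a measurable $T:I\to[t_1,t_N]$ with $\int_I T_i\,di=\sum_k q_kt_k$; its distribution is $\tau(B)=di(\{i:T_i\in B\})$. The procedure $FEASIBLE(\mathbf q,\mathbf t,\tau)$, for $N\ge0$, reals $t_1<\dots<t_N$, $q_1,\dots,q_N\ge0$ and a finite Borel measure $\tau$ on $\mathbb R$, returns a Boolean computed as follows. Set $t_{N+1}=+\infty$, $q_{N+1}=0$. (1) If $\tau((-\infty,t_1))>0$, return FALSE. (2) Else if $N=0$, return TRUE. (3) Else if $\tau([t_1,t_N])=0$, return TRUE. (4) Otherwise let $n$ be the smallest integer with $\tau([t_n,t_{n+1}])>0$. (4a) If $q_1=0$, return $FEASIBLE((q_2,\dots,q_N),(t_2,\dots,t_N),\tau)$. (4b) Else if $q_{n+1}=0$ and $N>1$, return $FEASIBLE$ applied to the vectors with the $(n+1)$-th entries removed and the same $\tau$. (4c) Otherwise define, for $t\in[t_n,t_{n+1}]$, $\alpha_1(t)=\frac{t_{n+1}-t}{t_{n+1}-t_1}$,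 $\alpha_{n+1}(t)=\frac{t-t_1}{t_{n+1}-t_1}$; for $m\ge0$ let $t^m=\inf\{t:\tau([t_n,t])>m\}$, $\tau^m=\tau|_{[t_n,t^m)}+(m-\tau([t_n,t^m)))\delta_{t^m}$, $J_1(m)=\int\alpha_1\,d\tau^m$, $J_{n+1}(m)=\int\alpha_{n+1}\,d\tau^m$; let $M=\tau([t_n,t_{n+1}])$, $M_1=\sup\{m\le M:J_1(m)<q_1\}$, $M_{n+1}=\sup\{m\le M:J_{n+1}(m)<q_{n+1}\}$, $M_{min}=\min\{M_1,M_{n+1}\}$; return $FEASIBLE((q_1-J_1(M_{min}),q_2,\dots,q_n,q_{n+1}-J_{n+1}(M_{min}),q_{n+2},\dots,q_N),(t_1,\dots,t_N),\tau-\tau^{M_{min}})$. *)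

theory Defs
  imports "HOL-Analysis.Analysis"
begin

text \<open>States of the recursive procedure FEASIBLE: (q, t, tau), with vectors as lists
  (0-based: paper index k is list index k-1) and tau a finite Borel measure on the reals.\<close>
type_synonym feas_state = "real list \<times> real list \<times> real measure"

text \<open>Segment [t_(k+1), t_(k+2)] (0-based k), with t_(N+1) = +infinity.\<close>
definition seg :: "real list \<Rightarrow> nat \<Rightarrow> real set" where
  "seg ts k = (if Suc k < length ts then {ts ! k .. ts ! Suc k} else {ts ! k ..})"

definition del_at :: "nat \<Rightarrow> 'a list \<Rightarrow> 'a list" where
  "del_at k xs = take k xs @ drop (Suc k) xs"

text \<open>tau^m for base point tn: tau restricted to [tn, t^m) plus the remaining mass
  (m - tau([tn,t^m))) at t^m, where t^m = inf {t. tau([tn,t]) > m} (taken in the extended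
  reals, so that inf of the empty set is +infinity; then no point mass is added).\<close>
definition tau_trunc :: "real measure \<Rightarrow> real \<Rightarrow> real \<Rightarrow> real measure" where
  "tau_trunc tau tn m =
     (let tm = Inf {ereal t | t. measure tau {tn..t} > m};
          S = {t. tn \<le> t \<and> ereal t < tm}
      in measure_of UNIV (sets borel)
           (\<lambda>A. emeasure tau (A \<inter> S)
                + (if tm = \<infinity> \<or> tm = - \<infinity> then 0
                   else ennreal (m - measure tau S) * indicator A (real_of_ereal tm))))"

text \<open>Difference of measures tau - sg (used only for sg \<le> tau).\<close>
definition meas_diff :: "real measure \<Rightarrow> real measure \<Rightarrow> real measure" where
  "meas_diff tau sg = measure_of UNIV (sets borel) (\<lambda>A. emeasure tau A - emeasure sg A)"

text \<open>One step of FEASIBLE: None if the procedure returns a Boolean at this call,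
  Some s' if it makes the recursive call FEASIBLE(s').\<close>
definition feas_next :: "feas_state \<Rightarrow> feas_state option" where
  "feas_next s = (case s of (qs, ts, tau) \<Rightarrow>
     if emeasure tau {..< ts ! 0} > 0 then None
     else if ts = [] then None
     else if measure tau {ts ! 0 .. last ts} = 0 then None
     else
       (let n = (LEAST k. k < length ts \<and> measure tau (seg ts k) > 0) in
        if qs ! 0 = 0 then Some (tl qs, tl ts, tau)
        else if (if Suc n < length ts then qs ! Suc n else 0) = 0 \<and> length ts > 1
          then Some (del_at (Suc n) qs, del_at (Suc n) ts, tau)
        else if Suc n < length ts then
          (let t1 = ts ! 0; tn = ts ! n; tn1 = ts ! Suc n;
               a1 = (\<lambda>t. (tn1 - t) / (tn1 - t1));
               an1 = (\<lambda>t. (t - t1) / (tn1 - t1));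
               J1 = (\<lambda>m. integral\<^sup>L (tau_trunc tau tn m) a1);
               Jn1 = (\<lambda>m. integral\<^sup>L (tau_trunc tau tn m) an1);
               M = measure tau {tn .. tn1};
               M1 = Sup {m. 0 \<le> m \<and> m \<le> M \<and> J1 m < qs ! 0};
               Mn1 = Sup {m. 0 \<le> m \<and> m \<le> M \<and> Jn1 m < qs ! Suc n};
               Mmin = min M1 Mn1
           in Some (qs[0 := qs ! 0 - J1 Mmin, Suc n := qs ! Suc n - Jn1 Mmin],
                    ts, meas_diff tau (tau_trunc tau tn Mmin)))
        else None))"

definition feas_terminates :: "feas_state \<Rightarrow> bool" where
  "feas_terminates s = (\<exists>k. ((\<lambda>x. Option.bind x feas_next) ^^ k) (Some s) = None)"

end

theory Submission imports Defs begin

definition tmE :: "real measure \<Rightarrow> real \<Rightarrow> real \<Rightarrow> ereal" where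
  "tmE tau tn m = Inf {ereal t | t. measure tau {tn..t} > m}"
definition Sset :: "real measure \<Rightarrow> real \<Rightarrow> real \<Rightarrow> real set" where
  "Sset tau tn m = {t. tn \<le> t \<and> ereal t < tmE tau tn m}"

lemma measure_le_incseq:
  fixes M :: "'b measure"
  assumes "finite_measure M" "range A \<subseteq> sets M" "incseq A" "\<And>i. measure M (A i) \<le> m"
  shows "measure M (\<Union>i. A i) \<le> m"
proof -
  interpret finite_measure M by fact
  show ?thesis using finite_Lim_measure_incseq[OF assms(2,3)]
    by (rule LIMSEQ_le_const2) (use assms(4) in auto)
qed

lemma measure_ge_decseq:
  fixes M :: "'b measure"
  assumes "finite_measure M" "range A \<subseteq> sets M" "decseq A" "\<And>i. measure M (A i) \<ge> m"
  shows "measure M (\<Inter>i. A i) \<ge> m"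
proof -
  interpret finite_measure M by fact
  show ?thesis using finite_Lim_measure_decseq[OF assms(2,3)]
    by (rule LIMSEQ_le_const) (use assms(4) in auto)
qed

definition pt :: "real measure \<Rightarrow> real \<Rightarrow> real \<Rightarrow> real" where
  "pt tau tn m = (if tmE tau tn m = \<infinity> then tn - 1 else real_of_ereal (tmE tau tn m))"
definition cc :: "real measure \<Rightarrow> real \<Rightarrow> real \<Rightarrow> real" where
  "cc tau tn m = (if tmE tau tn m = \<infinity> then 0 else (m - measure tau (Sset tau tn m)) / measure tau {pt tau tn m})"
definition ff :: "real measure \<Rightarrow> real \<Rightarrow> real \<Rightarrow> real \<Rightarrow> real" where
  "ff tau tn m x = indicator (Sset tau tn m) x + cc tau tn m * indicator {pt tau tn m} x"

context
  fixes tau :: "real measure" and tn :: real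
  assumes fin: "finite_measure tau" and sb: "sets tau = sets borel"
begin

lemma tmE_ge: "0 \<le> m \<Longrightarrow> ereal tn \<le> tmE tau tn m"
  unfolding tmE_def
proof (rule Inf_greatest, clarify)
  fix t assume "0 \<le> m" "m < measure tau {tn..t}"
  show "ereal tn \<le> ereal t"
  proof (rule ccontr)
    assume "\<not> ereal tn \<le> ereal t"
    then have "{tn..t} = {}" by auto
    with \<open>0 \<le> m\<close> \<open>m < measure tau {tn..t}\<close> show False by simp
  qed
qed

lemma tmE_mono: "m \<le> m' \<Longrightarrow> tmE tau tn m \<le> tmE tau tn m'"
  unfolding tmE_def by (rule Inf_superset_mono) auto

lemma F_le: "tn \<le> t \<Longrightarrow> ereal t < tmE tau tn m \<Longrightarrow> measure tau {tn..t} \<le> m"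
proof (rule ccontr)
  assume "ereal t < tmE tau tn m" "\<not> measure tau {tn..t} \<le> m"
  then have "tmE tau tn m \<le> ereal t" unfolding tmE_def by (intro Inf_lower) auto
  with \<open>ereal t < _\<close> show False by simp
qed

lemma S_le: assumes "0 \<le> m" shows "measure tau (Sset tau tn m) \<le> m"
proof (cases "tmE tau tn m")
  case PInf
  have "Sset tau tn m = (\<Union>i. {tn..tn + real i})"
    unfolding Sset_def PInf by (auto, metis add.commute diff_le_eq real_arch_simple)
  moreover have "measure tau (\<Union>i. {tn..tn + real i}) \<le> m"
    by (rule measure_le_incseq[OF fin]) (auto simp: sb incseq_def PInf intro!: F_le)
  ultimately show ?thesis by simp
next
  case MInf
  then have "Sset tau tn m = {}" unfolding Sset_def by auto
  then show ?thesis using assms by simp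
next
  case (real p)
  have "Sset tau tn m = (\<Union>i. {tn..p - 1 / Suc i})"
  proof (intro set_eqI iffI)
    fix x assume "x \<in> Sset tau tn m"
    then have x: "tn \<le> x" "x < p" unfolding Sset_def real by auto
    then obtain i where "1 / Suc i < p - x"
      by (metis diff_gt_0_iff_gt nat_approx_posE)
    then show "x \<in> (\<Union>i. {tn..p - 1 / Suc i})" using x by (auto intro!: exI[of _ i])
  next
    fix x assume "x \<in> (\<Union>i. {tn..p - 1 / Suc i})"
    then obtain i where "tn \<le> x" "x \<le> p - 1 / Suc i" by auto
    moreover have "1 / Suc i > 0" by simp
    ultimately have "tn \<le> x" "x < p" by linarith+
    then show "x \<in> Sset tau tn m" unfolding Sset_def real by auto
  qed
  moreover have "measure tau (\<Union>i. {tn..p - 1 / Suc i}) \<le> m"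
  proof (rule measure_le_incseq[OF fin])
    show "incseq (\<lambda>i. {tn..p - 1 / real (Suc i)})"
      by (auto simp: incseq_def frac_le intro!: order.trans[of _ "p - 1 / Suc _"])
    fix i
    show "measure tau {tn..p - 1 / real (Suc i)} \<le> m"
    proof (cases "tn \<le> p - 1 / Suc i")
      case True
      then show ?thesis by (intro F_le) (auto simp: real)
    qed (use assms in auto)
  qed (auto simp: sb)
  ultimately show ?thesis by simp
qed

lemma S_pt_ge:
  assumes "0 \<le> m" "tmE tau tn m = ereal p"
  shows "m \<le> measure tau {tn..p}"
proof -
  have ex: "\<exists>t. m < measure tau {tn..t} \<and> t < p + e" if "e > 0" for e
  proof (rule ccontr)
    assume "\<not> ?thesis"
    then have "ereal (p + e) \<le> tmE tau tn m" unfolding tmE_def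
      by (intro Inf_greatest) force
    with that assms show False by simp
  qed
  have F: "m < measure tau {tn..p + e}" if e0: "e > 0" for e
  proof -
    obtain t where t: "m < measure tau {tn..t}" "t < p + e" using ex[OF e0] by auto
    have "measure tau {tn..t} \<le> measure tau {tn..p + e}"
      using t by (intro finite_measure.finite_measure_mono[OF fin]) (auto simp: sb)
    with t show ?thesis by simp
  qed
  have "{tn..p} = (\<Inter>i. {tn..p + 1 / Suc i})"
  proof (intro set_eqI iffI)
    fix x assume "x \<in> (\<Inter>i. {tn..p + 1 / Suc i})"
    then have "tn \<le> x" "\<And>i. x \<le> p + 1 / Suc i" by auto
    moreover have "x \<le> p"
    proof (rule ccontr)
      assume "\<not> x \<le> p"
      then obtain i where "1 / Suc i < x - p"
        by (metis diff_gt_0_iff_gt nat_approx_posE not_le)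
      with \<open>\<And>i. x \<le> p + 1 / Suc i\<close>[of i] show False by simp
    qed
    ultimately show "x \<in> {tn..p}" by auto
  qed (auto intro: order.trans[of _ p])
  moreover have "m \<le> measure tau (\<Inter>i. {tn..p + 1 / Suc i})"
    by (rule measure_ge_decseq[OF fin])
      (auto simp: sb decseq_def frac_le intro!: order.trans[of _ "p + 1 / Suc _"] less_imp_le[OF F])
  ultimately show ?thesis by simp
qed


lemma sp: "space tau = UNIV"
  using sets_eq_imp_space_eq[OF sb] by simp

lemma meas_tau: "A \<in> sets borel \<Longrightarrow> A \<in> sets tau"
  using sb by simp

lemma tmE_fin: assumes "0 \<le> m" "tmE tau tn m \<noteq> \<infinity>"
  shows "tmE tau tn m = ereal (pt tau tn m)"
  using tmE_ge[OF assms(1)] assms(2) unfolding pt_def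
  by (cases "tmE tau tn m") auto

lemma Sset_eq: assumes "0 \<le> m"
  shows "Sset tau tn m = (if tmE tau tn m = \<infinity> then {tn..} else {tn..<pt tau tn m})"
proof (cases "tmE tau tn m = \<infinity>")
  case False
  then show ?thesis using tmE_fin[OF assms False] unfolding Sset_def by auto
next
  case True
  then show ?thesis unfolding Sset_def by auto
qed

lemma Sset_borel: "0 \<le> m \<Longrightarrow> Sset tau tn m \<in> sets borel"
  by (simp add: Sset_eq)

lemma pt_notin: "0 \<le> m \<Longrightarrow> pt tau tn m \<notin> Sset tau tn m"
  by (simp add: Sset_eq pt_def)

lemma split_pt: assumes "0 \<le> m" "tmE tau tn m \<noteq> \<infinity>"
  shows "measure tau {tn..pt tau tn m} = measure tau (Sset tau tn m) + measure tau {pt tau tn m}"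
proof -
  have ge: "tn \<le> pt tau tn m" using tmE_ge[OF assms(1)] tmE_fin[OF assms] by simp
  have "{tn..pt tau tn m} = Sset tau tn m \<union> {pt tau tn m}"
    using ge by (auto simp: Sset_eq[OF assms(1)] assms(2))
  moreover have "measure tau (Sset tau tn m \<union> {pt tau tn m}) = measure tau (Sset tau tn m) + measure tau {pt tau tn m}"
    using pt_notin[OF assms(1)] assms(1) Sset_borel[OF assms(1)]
    by (intro finite_measure.finite_measure_Union[OF fin]) (auto simp: sb)
  ultimately show ?thesis by simp
qed

lemma pt_ge: "0 \<le> m \<Longrightarrow> tmE tau tn m \<noteq> \<infinity> \<Longrightarrow>
   m - measure tau (Sset tau tn m) \<le> measure tau {pt tau tn m}"
  using split_pt S_pt_ge tmE_fin by fastforce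

lemma cc_nonneg: "0 \<le> m \<Longrightarrow> 0 \<le> cc tau tn m"
  unfolding cc_def using S_le by auto

lemma cc_le1: "0 \<le> m \<Longrightarrow> cc tau tn m \<le> 1"
  proof -
  assume m: "0 \<le> m"
  have "0 \<le> measure tau {pt tau tn m}" by simp
  then show ?thesis unfolding cc_def using pt_ge[OF m]
    by (smt (verit) divide_le_eq_1)
qed

lemma cc_mul: assumes "0 \<le> m" "tmE tau tn m \<noteq> \<infinity>"
  shows "cc tau tn m * measure tau {pt tau tn m} = m - measure tau (Sset tau tn m)"
proof (cases "measure tau {pt tau tn m} = 0")
  case True
  then show ?thesis using pt_ge[OF assms] S_le[OF assms(1)] by (simp add: cc_def)
qed (use assms in \<open>simp add: cc_def\<close>)

lemma ff_nonneg: "0 \<le> m \<Longrightarrow> 0 \<le> ff tau tn m x"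
  unfolding ff_def using cc_nonneg by simp

lemma ff_le1: "0 \<le> m \<Longrightarrow> ff tau tn m x \<le> 1"
  unfolding ff_def using cc_le1 pt_notin[of m]
  by (cases "x \<in> Sset tau tn m"; cases "x = pt tau tn m") auto

lemma ff_meas: assumes m: "0 \<le> m" shows "ff tau tn m \<in> borel_measurable borel"
proof -
  have [measurable]: "Sset tau tn m \<in> sets borel" by (rule Sset_borel[OF m])
  show ?thesis unfolding ff_def by measurable
qed

lemma ff_meas': "0 \<le> m \<Longrightarrow> ff tau tn m \<in> borel_measurable tau"
  using ff_meas measurable_cong_sets[OF sb refl] by blast

lemma trunc_density: assumes m: "0 \<le> m"
  shows "tau_trunc tau tn m = density tau (\<lambda>x. ennreal (ff tau tn m x))"
proof -
  let ?D = "density tau (\<lambda>x. ennreal (ff tau tn m x))"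
  have "?D = measure_of UNIV (sets borel) (emeasure ?D)"
    using measure_of_of_measure[of ?D] by (simp add: sp sb)
  also have "\<dots> = tau_trunc tau tn m"
    unfolding tau_trunc_def Let_def tmE_def[symmetric] Sset_def[symmetric]
  proof (rule measure_of_eq)
    fix A :: "real set" assume "A \<in> sigma_sets UNIV (sets borel)"
    then have A[measurable]: "A \<in> sets borel" using sets.sigma_sets_eq[of "borel :: real measure"] by simp
    have At[measurable]: "A \<in> sets tau" using A sb by simp
    have St[measurable]: "Sset tau tn m \<in> sets tau" using Sset_borel[OF m] sb by simp
    have fm[measurable]: "ff tau tn m \<in> borel_measurable tau" by (rule ff_meas'[OF m])
    have Pt[measurable]: "{pt tau tn m} \<in> sets tau" using sb by simp
    have pw: "ennreal (ff tau tn m x) * indicator A x =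
       indicator (A \<inter> Sset tau tn m) x + ennreal (cc tau tn m) * indicator (A \<inter> {pt tau tn m}) x" for x
    proof -
      have pn: "pt tau tn m \<notin> Sset tau tn m" by (rule pt_notin[OF m])
      show ?thesis
      proof (cases "x \<in> A")
        case False then show ?thesis by (simp add: indicator_def)
      next
        case xA: True
        show ?thesis
        proof (cases "x \<in> Sset tau tn m")
          case True
          then have "x \<noteq> pt tau tn m" using pn by auto
          then show ?thesis using True xA by (simp add: ff_def indicator_def)
        next
          case False
          then show ?thesis using xA by (simp add: ff_def indicator_def)
        qed
      qed
    qed
    have fme: "(\<lambda>x. ennreal (ff tau tn m x)) \<in> borel_measurable tau" by measurable
    have "emeasure ?D A = (\<integral>\<^sup>+ x. ennreal (ff tau tn m x) * indicator A x \<partial>tau)"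
      by (rule emeasure_density[OF fme At])
    also have "\<dots> = (\<integral>\<^sup>+ x. indicator (A \<inter> Sset tau tn m) x + ennreal (cc tau tn m) * indicator (A \<inter> {pt tau tn m}) x \<partial>tau)"
      by (simp only: pw)
    also have "\<dots> = emeasure tau (A \<inter> Sset tau tn m) + ennreal (cc tau tn m) * emeasure tau (A \<inter> {pt tau tn m})"
    proof -
      have i1: "(\<lambda>x. indicator (A \<inter> Sset tau tn m) x :: ennreal) \<in> borel_measurable tau" by measurable
      have i2: "(\<lambda>x. ennreal (cc tau tn m) * indicator (A \<inter> {pt tau tn m}) x) \<in> borel_measurable tau" by measurable
      have i3: "(\<lambda>x. indicator (A \<inter> {pt tau tn m}) x :: ennreal) \<in> borel_measurable tau" by measurable
      show ?thesis
        unfolding nn_integral_add[OF i1 i2] nn_integral_cmult[OF i3]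
        by (simp only: nn_integral_indicator[OF sets.Int[OF At St]]
             nn_integral_indicator[OF sets.Int[OF At Pt]])
    qed
    also have "\<dots> = emeasure tau (A \<inter> Sset tau tn m) +
        (if tmE tau tn m = \<infinity> \<or> tmE tau tn m = - \<infinity> then 0
         else ennreal (m - measure tau (Sset tau tn m)) * indicator A (real_of_ereal (tmE tau tn m)))"
    proof (cases "tmE tau tn m = \<infinity>")
      case True
      then show ?thesis by (simp add: cc_def)
    next
      case False
      have nm: "tmE tau tn m \<noteq> - \<infinity>" using tmE_ge[OF m] by auto
      show ?thesis
      proof (cases "pt tau tn m \<in> A")
        case True
        then have "A \<inter> {pt tau tn m} = {pt tau tn m}" by auto
        then have "ennreal (cc tau tn m) * emeasure tau (A \<inter> {pt tau tn m}) =
             ennreal (cc tau tn m * measure tau {pt tau tn m})"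
          using cc_nonneg[OF m]
          by (simp add: finite_measure.emeasure_eq_measure[OF fin] ennreal_mult)
        then show ?thesis using True False nm cc_mul[OF m False] by (simp add: pt_def)
      next
        case F2: False
        then have "A \<inter> {pt tau tn m} = {}" by auto
        then show ?thesis using F2 False nm by (simp add: pt_def)
      qed
    qed
    finally show "emeasure ?D A = emeasure tau (A \<inter> Sset tau tn m) +
        (if tmE tau tn m = \<infinity> \<or> tmE tau tn m = - \<infinity> then 0
         else ennreal (m - measure tau (Sset tau tn m)) * indicator A (real_of_ereal (tmE tau tn m)))" .
  qed auto
  finally show ?thesis by simp
qed


lemma ff_on_S: "0 \<le> m \<Longrightarrow> x \<in> Sset tau tn m \<Longrightarrow> ff tau tn m x = 1"
  using pt_notin[of m] unfolding ff_def by (cases "x = pt tau tn m") auto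

lemma ff_off: "0 \<le> m \<Longrightarrow> x \<notin> Sset tau tn m \<Longrightarrow> x \<noteq> pt tau tn m \<Longrightarrow> ff tau tn m x = 0"
  unfolding ff_def by auto

lemma int_ff: assumes m: "0 \<le> m" and mM: "m \<le> measure tau {tn..}"
  shows "integral\<^sup>L tau (ff tau tn m) = m"
proof -
  interpret finite_measure tau by (rule fin)
  have St[measurable]: "Sset tau tn m \<in> sets tau" using Sset_borel[OF m] sb by simp
  have Pt[measurable]: "{pt tau tn m} \<in> sets tau" using sb by simp
  have "integral\<^sup>L tau (ff tau tn m) = integral\<^sup>L tau (indicator (Sset tau tn m)) +
      integral\<^sup>L tau (\<lambda>x. cc tau tn m * indicator {pt tau tn m} x)"
    unfolding ff_def using m
    by (intro Bochner_Integration.integral_add) (auto intro!: integrable_const_bound[where B=1])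
  also have "\<dots> = measure tau (Sset tau tn m) + cc tau tn m * measure tau {pt tau tn m}"
    by (simp add: sp)
  also have "\<dots> = m"
  proof (cases "tmE tau tn m = \<infinity>")
    case True
    then have "Sset tau tn m = {tn..}" by (simp add: Sset_eq[OF m])
    then show ?thesis using S_le[OF m] mM True by (simp add: cc_def)
  next
    case False
    then show ?thesis using cc_mul[OF m False] by simp
  qed
  finally show ?thesis .
qed

lemma ff_mono: assumes m: "0 \<le> m" and mm: "m \<le> m'"
  shows "ff tau tn m x \<le> ff tau tn m' x"
proof -
  have m': "0 \<le> m'" using m mm by simp
  have le: "tmE tau tn m \<le> tmE tau tn m'" by (rule tmE_mono[OF mm])
  show ?thesis
  proof (cases "tmE tau tn m = tmE tau tn m'")
    case True
    then have S: "Sset tau tn m = Sset tau tn m'" and P: "pt tau tn m = pt tau tn m'"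
      unfolding Sset_def pt_def by auto
    have "cc tau tn m \<le> cc tau tn m'"
      unfolding cc_def using True S P mm
      by (auto intro!: divide_right_mono)
    then show ?thesis unfolding ff_def S P by (auto simp: indicator_def)
  next
    case False
    then have lt: "tmE tau tn m < tmE tau tn m'" using le by simp
    then have nf: "tmE tau tn m \<noteq> \<infinity>" by auto
    show ?thesis
    proof (cases "x \<in> Sset tau tn m \<or> x = pt tau tn m")
      case True
      then have "tn \<le> x \<and> ereal x \<le> tmE tau tn m"
        using tmE_fin[OF m nf] tmE_ge[OF m] unfolding Sset_def by auto
      then have "x \<in> Sset tau tn m'" using lt unfolding Sset_def by auto
      then show ?thesis using ff_on_S[OF m'] ff_le1[OF m] by simp
    next
      case False
      then show ?thesis using ff_off[OF m] ff_nonneg[OF m'] by simp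
    qed
  qed
qed

lemma ff_supp: assumes m: "0 \<le> m" and t: "tn \<le> tn1" and mM: "m \<le> measure tau {tn..tn1}"
  shows "AE x in tau. x \<notin> {tn..tn1} \<longrightarrow> ff tau tn m x = 0"
proof (cases "tmE tau tn m \<le> ereal tn1")
  case True
  then have nf: "tmE tau tn m \<noteq> \<infinity>" by auto
  have "x \<notin> {tn..tn1} \<longrightarrow> ff tau tn m x = 0" for x
  proof (intro impI, rule ccontr)
    assume x: "x \<notin> {tn..tn1}" "ff tau tn m x \<noteq> 0"
    then have "x \<in> Sset tau tn m \<or> x = pt tau tn m" using ff_off[OF m] by blast
    then have "tn \<le> x \<and> ereal x \<le> tmE tau tn m"
      using tmE_fin[OF m nf] tmE_ge[OF m] unfolding Sset_def by auto
    then have "x \<le> tn1" using True by (metis ereal_less_eq(3) order.trans)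
    then show False using x \<open>tn \<le> x \<and> _\<close> by auto
  qed
  then show ?thesis by simp
next
  case False
  interpret finite_measure tau by (rule fin)
  have St[measurable]: "Sset tau tn m \<in> sets tau" using Sset_borel[OF m] sb by simp
  have It[measurable]: "{tn..tn1} \<in> sets tau" using sb by simp
  have sub: "{tn..tn1} \<subseteq> Sset tau tn m"
  proof
    fix x assume x: "x \<in> {tn..tn1}"
    then have "ereal x \<le> ereal tn1" by simp
    also have "\<dots> < tmE tau tn m" using False by simp
    finally show "x \<in> Sset tau tn m" using x unfolding Sset_def by auto
  qed
  then have "measure tau {tn..tn1} \<le> measure tau (Sset tau tn m)"
    using m Sset_borel[OF m] by (intro finite_measure_mono) (auto simp: sb)
  then have eq: "measure tau (Sset tau tn m) = m" "measure tau {tn..tn1} = m"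
    using S_le[OF m] mM by auto
  then have "measure tau (Sset tau tn m - {tn..tn1}) = 0"
    using sub m St It by (subst finite_measure_Diff) auto
  then have N: "Sset tau tn m - {tn..tn1} \<in> null_sets tau"
    using m St It by (intro null_setsI) (auto simp: emeasure_eq_measure)
  have cc0: "cc tau tn m = 0" unfolding cc_def using eq by simp
  show ?thesis
  proof (rule AE_I'[OF N])
  qed (use cc0 in \<open>auto simp: ff_def indicator_def split: if_splits\<close>)
qed

lemma dens_finite: assumes g[measurable]: "g \<in> borel_measurable tau" and "\<And>x. 0 \<le> g x" "\<And>x. g x \<le> 1"
  shows "finite_measure (density tau (\<lambda>x. ennreal (g x)))"
proof (rule finite_measureI)
  interpret finite_measure tau by (rule fin)
  have "emeasure (density tau (\<lambda>x. ennreal (g x))) (space (density tau (\<lambda>x. ennreal (g x))))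
      = (\<integral>\<^sup>+ x. ennreal (g x) \<partial>tau)"
    using sets.top[of tau] by (subst emeasure_density) (auto simp: sp)
  also have "\<dots> \<le> (\<integral>\<^sup>+ x. 1 \<partial>tau)"
    using assms by (intro nn_integral_mono) (auto simp: indicator_def)
  also have "\<dots> < \<infinity>" by (simp add: emeasure_eq_measure)
  finally show "emeasure (density tau (\<lambda>x. ennreal (g x))) (space (density tau (\<lambda>x. ennreal (g x)))) \<noteq> \<infinity>"
    by simp
qed

lemma dens_measure: assumes g[measurable]: "g \<in> borel_measurable tau" and g0: "\<And>x. 0 \<le> g x" and g1: "\<And>x. g x \<le> 1"
  and A[measurable]: "A \<in> sets borel"
  shows "measure (density tau (\<lambda>x. ennreal (g x))) A = integral\<^sup>L tau (\<lambda>x. g x * indicator A x)"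
proof -
  have [measurable]: "A \<in> sets tau" using A sb by simp
  interpret finite_measure tau by (rule fin)
  interpret D: finite_measure "density tau (\<lambda>x. ennreal (g x))" by (rule dens_finite[OF assms(1-3)])
  have "measure (density tau (\<lambda>x. ennreal (g x))) A = integral\<^sup>L (density tau (\<lambda>x. ennreal (g x))) (indicator A)"
    by (simp add: sp)
  also have "\<dots> = integral\<^sup>L tau (\<lambda>x. g x * indicator A x)"
    using g0 by (subst integral_density) auto
  finally show ?thesis .
qed

lemma meas_diff_dens: assumes m: "0 \<le> m"
  shows "meas_diff tau (tau_trunc tau tn m) = density tau (\<lambda>x. ennreal (1 - ff tau tn m x))"
proof -
  interpret finite_measure tau by (rule fin)
  let ?D = "density tau (\<lambda>x. ennreal (1 - ff tau tn m x))"
  have "?D = measure_of UNIV (sets borel) (emeasure ?D)"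
    using measure_of_of_measure[of ?D] by (simp add: sp sb)
  also have "\<dots> = meas_diff tau (tau_trunc tau tn m)"
    unfolding meas_diff_def trunc_density[OF m]
  proof (rule measure_of_eq)
    fix A :: "real set" assume "A \<in> sigma_sets UNIV (sets borel)"
    then have A[measurable]: "A \<in> sets borel" using sets.sigma_sets_eq[of "borel :: real measure"] by simp
    have At[measurable]: "A \<in> sets tau" using A sb by simp
    have fm[measurable]: "ff tau tn m \<in> borel_measurable tau" by (rule ff_meas'[OF m])
    have "emeasure tau A = (\<integral>\<^sup>+ x. indicator A x \<partial>tau)" by simp
    also have "\<dots> = (\<integral>\<^sup>+ x. ennreal (ff tau tn m x) * indicator A x + ennreal (1 - ff tau tn m x) * indicator A x \<partial>tau)"
      using ff_nonneg[OF m] ff_le1[OF m]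
      by (intro nn_integral_cong) (auto simp: indicator_def simp flip: ennreal_plus)
    also have "\<dots> = emeasure (density tau (\<lambda>x. ennreal (ff tau tn m x))) A + emeasure ?D A"
      using m by (simp add: emeasure_density nn_integral_add)
    finally have eq: "emeasure tau A = emeasure (density tau (\<lambda>x. ennreal (ff tau tn m x))) A + emeasure ?D A" .
    have "emeasure (density tau (\<lambda>x. ennreal (ff tau tn m x))) A \<noteq> \<infinity>"
      using finite_measure.emeasure_finite[OF dens_finite[OF ff_meas'[OF m] ff_nonneg[OF m] ff_le1[OF m]]] by simp
    then show "emeasure ?D A = emeasure tau A - emeasure (density tau (\<lambda>x. ennreal (ff tau tn m x))) A"
      unfolding eq by simp
  qed auto
  finally show ?thesis by simp
qed


lemma borel_tau: "f \<in> borel_measurable borel \<Longrightarrow> f \<in> borel_measurable tau"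
  by (simp add: measurable_cong_sets[OF sb refl])

lemma J_eq:
  fixes a :: "real \<Rightarrow> real" and tn1 :: real
  assumes a[measurable]: "a \<in> borel_measurable borel" and m: "0 \<le> m" and t: "tn \<le> tn1"
    and mM: "m \<le> measure tau {tn..tn1}"
  shows "integral\<^sup>L (tau_trunc tau tn m) a = integral\<^sup>L tau (\<lambda>x. ff tau tn m x * (a x * indicator {tn..tn1} x))"
proof -
  have a'[measurable]: "a \<in> borel_measurable tau" using a measurable_cong_sets[OF sb refl] by blast
  have fm[measurable]: "ff tau tn m \<in> borel_measurable tau" by (rule ff_meas'[OF m])
  have [measurable]: "{tn..tn1} \<in> sets tau" using sb by simp
  have "integral\<^sup>L (tau_trunc tau tn m) a = integral\<^sup>L tau (\<lambda>x. ff tau tn m x *\<^sub>R a x)"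
    unfolding trunc_density[OF m] using ff_nonneg[OF m]
    by (intro integral_density a' fm) auto
  also have "\<dots> = integral\<^sup>L tau (\<lambda>x. ff tau tn m x * (a x * indicator {tn..tn1} x))"
    apply (rule integral_cong_AE)
    subgoal by measurable
    subgoal by measurable
    subgoal using ff_supp[OF m t mM] by eventually_elim (auto simp: indicator_def)
    done
  finally show ?thesis .
qed

lemma J_mono:
  fixes a :: "real \<Rightarrow> real" and tn1 :: real
  assumes a[measurable]: "a \<in> borel_measurable borel" and t: "tn \<le> tn1"
    and a01: "\<And>x. x \<in> {tn..tn1} \<Longrightarrow> 0 \<le> a x \<and> a x \<le> 1"
    and m: "0 \<le> m" and mm: "m \<le> m'" and mM: "m' \<le> measure tau {tn..tn1}"
  shows "integral\<^sup>L (tau_trunc tau tn m) a \<le> integral\<^sup>L (tau_trunc tau tn m') a \<and>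
         integral\<^sup>L (tau_trunc tau tn m') a - integral\<^sup>L (tau_trunc tau tn m) a \<le> m' - m"
proof -
  interpret finite_measure tau by (rule fin)
  have m': "0 \<le> m'" using m mm by simp
  define aw where "aw = (\<lambda>x. a x * indicator {tn..tn1} x)"
  have aw01: "0 \<le> aw x" "aw x \<le> 1" for x using a01[of x] by (auto simp: aw_def indicator_def)
  have aw_m[measurable]: "aw \<in> borel_measurable tau"
    unfolding aw_def by (rule borel_tau) measurable
  have intg: "integrable tau (\<lambda>x. ff tau tn k x * aw x)" if k0: "0 \<le> k" for k
  proof -
    have [measurable]: "ff tau tn k \<in> borel_measurable tau" by (rule ff_meas'[OF k0])
    show ?thesis
      apply (rule integrable_const_bound[where B=1])
      subgoal using ff_nonneg[OF k0] ff_le1[OF k0] aw01 by (auto simp: abs_mult intro!: mult_le_one)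
      subgoal by measurable
      done
  qed
  have intf: "integrable tau (ff tau tn k)" if k0: "0 \<le> k" for k
  proof -
    have [measurable]: "ff tau tn k \<in> borel_measurable tau" by (rule ff_meas'[OF k0])
    show ?thesis
      apply (rule integrable_const_bound[where B=1])
      subgoal using ff_nonneg[OF k0] ff_le1[OF k0] by auto
      subgoal by measurable
      done
  qed
  have e1: "integral\<^sup>L (tau_trunc tau tn m) a = integral\<^sup>L tau (\<lambda>x. ff tau tn m x * aw x)"
    unfolding aw_def using J_eq[OF a m t] mm mM by simp
  have e2: "integral\<^sup>L (tau_trunc tau tn m') a = integral\<^sup>L tau (\<lambda>x. ff tau tn m' x * aw x)"
    unfolding aw_def using J_eq[OF a m' t] mM by simp
  have d: "integral\<^sup>L tau (\<lambda>x. ff tau tn m' x * aw x) - integral\<^sup>L tau (\<lambda>x. ff tau tn m x * aw x)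
     = integral\<^sup>L tau (\<lambda>x. (ff tau tn m' x - ff tau tn m x) * aw x)"
    using intg[OF m] intg[OF m']
    by (subst Bochner_Integration.integral_diff[symmetric]) (auto simp: algebra_simps)
  have "0 \<le> integral\<^sup>L tau (\<lambda>x. (ff tau tn m' x - ff tau tn m x) * aw x)"
    using ff_mono[OF m mm] aw01 by (intro integral_nonneg_AE) auto
  moreover have "integral\<^sup>L tau (\<lambda>x. (ff tau tn m' x - ff tau tn m x) * aw x)
      \<le> integral\<^sup>L tau (\<lambda>x. ff tau tn m' x - ff tau tn m x)"
  proof (rule integral_mono)
    have "integrable tau (\<lambda>x. ff tau tn m' x * aw x - ff tau tn m x * aw x)"
      by (rule Bochner_Integration.integrable_diff[OF intg[OF m'] intg[OF m]])
    then show "integrable tau (\<lambda>x. (ff tau tn m' x - ff tau tn m x) * aw x)"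
      by (simp only: left_diff_distrib)
    show "integrable tau (\<lambda>x. ff tau tn m' x - ff tau tn m x)"
      by (rule Bochner_Integration.integrable_diff[OF intf[OF m'] intf[OF m]])
    fix x
    have "0 \<le> ff tau tn m' x - ff tau tn m x" using ff_mono[OF m mm, of x] by linarith
    then show "(ff tau tn m' x - ff tau tn m x) * aw x \<le> ff tau tn m' x - ff tau tn m x"
      by (rule mult_left_le[OF aw01(2)])
  qed
  moreover have "integral\<^sup>L tau (\<lambda>x. ff tau tn m' x - ff tau tn m x) = m' - m"
  proof -
    have "measure tau {tn..tn1} \<le> measure tau {tn..}"
      by (intro finite_measure_mono) (auto simp: sb)
    then show ?thesis
      using intf[OF m] intf[OF m'] int_ff[OF m] int_ff[OF m'] mm mM
      by (subst Bochner_Integration.integral_diff) auto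
  qed
  ultimately show ?thesis using e1 e2 d by linarith
qed

lemma J_zero:
  fixes a :: "real \<Rightarrow> real" and tn1 :: real
  assumes a[measurable]: "a \<in> borel_measurable borel" and t: "tn \<le> tn1"
    and a01: "\<And>x. x \<in> {tn..tn1} \<Longrightarrow> 0 \<le> a x \<and> a x \<le> 1"
  shows "integral\<^sup>L (tau_trunc tau tn 0) a = 0"
proof -
  interpret finite_measure tau by (rule fin)
  define aw where "aw = (\<lambda>x. a x * indicator {tn..tn1} x)"
  have aw01: "0 \<le> aw x" "aw x \<le> 1" for x using a01[of x] by (auto simp: aw_def indicator_def)
  have aw_m[measurable]: "aw \<in> borel_measurable tau"
    unfolding aw_def by (rule borel_tau) measurable
  have [measurable]: "ff tau tn 0 \<in> borel_measurable tau" by (rule ff_meas') simp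
  have intg: "integrable tau (\<lambda>x. ff tau tn 0 x * aw x)"
      apply (rule integrable_const_bound[where B=1])
      subgoal using ff_nonneg[of 0] ff_le1[of 0] aw01 by (auto simp: abs_mult intro!: mult_le_one)
      subgoal by measurable
      done
  have intf: "integrable tau (ff tau tn 0)"
      apply (rule integrable_const_bound[where B=1])
      subgoal using ff_nonneg[of 0] ff_le1[of 0] by auto
      subgoal by measurable
      done
  have e1: "integral\<^sup>L (tau_trunc tau tn 0) a = integral\<^sup>L tau (\<lambda>x. ff tau tn 0 x * aw x)"
    unfolding aw_def using J_eq[OF a order.refl t] by simp
  have "0 \<le> integral\<^sup>L tau (\<lambda>x. ff tau tn 0 x * aw x)"
    using ff_nonneg[of 0] aw01 by (intro integral_nonneg_AE) auto
  moreover have "integral\<^sup>L tau (\<lambda>x. ff tau tn 0 x * aw x) \<le> integral\<^sup>L tau (ff tau tn 0)"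
    using ff_nonneg[of 0] aw01 intg intf
    by (intro integral_mono) (auto intro!: mult_left_le)
  moreover have "integral\<^sup>L tau (ff tau tn 0) = 0"
    by (rule int_ff) auto
  ultimately show ?thesis using e1 by linarith
qed

end

lemma sup_lemma:
  fixes J :: "real \<Rightarrow> real"
  assumes M: "0 \<le> M" and J0: "J 0 < q"
    and Jm0: "\<forall>x y. 0 \<le> x \<longrightarrow> x \<le> y \<longrightarrow> y \<le> M \<longrightarrow> J x \<le> J y \<and> J y - J x \<le> y - x"
  defines "A \<equiv> Sup {m. 0 \<le> m \<and> m \<le> M \<and> J m < q}"
  shows "0 \<le> A" "A \<le> M" "\<And>m. 0 \<le> m \<Longrightarrow> m \<le> A \<Longrightarrow> J m \<le> q" "A < M \<Longrightarrow> J A = q"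
proof -
  note Jm = Jm0[rule_format]
  let ?X = "{m. 0 \<le> m \<and> m \<le> M \<and> J m < q}"
  have ne: "?X \<noteq> {}" and z: "0 \<in> ?X" using M J0 by auto
  have bdd: "bdd_above ?X" by (rule bdd_aboveI[of _ M]) auto
  show A0: "0 \<le> A" unfolding A_def using cSup_upper[OF z bdd] .
  show AM: "A \<le> M" unfolding A_def by (rule cSup_least[OF ne]) auto
  have JA: "J A \<le> q"
  proof (rule ccontr)
    assume "\<not> J A \<le> q"
    then have e: "J A - q > 0" by simp
    have "A - (J A - q) < A" using e by simp
    then obtain y where y: "y \<in> ?X" "A - (J A - q) < y" using less_cSupD[OF ne] unfolding A_def by blast
    have "y \<le> A" unfolding A_def using cSup_upper[OF y(1) bdd] .
    then have "J A - J y \<le> A - y" using Jm[of y A] y AM by auto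
    then show False using y by auto
  qed
  show "J m \<le> q" if "0 \<le> m" "m \<le> A" for m
  proof (cases "m = A")
    case True then show ?thesis using JA by simp
  next
    case False
    then have "m < A" using that by simp
    then obtain y where y: "y \<in> ?X" "m < y" using less_cSupD[OF ne] unfolding A_def by blast
    then show ?thesis using Jm[of m y] that by auto
  qed
  show "J A = q" if AlM: "A < M"
  proof (rule ccontr)
    assume "J A \<noteq> q"
    then have e: "q - J A > 0" using JA by simp
    define y where "y = min M (A + (q - J A) / 2)"
    have yA: "A < y" using e AlM by (simp add: y_def)
    have "J y - J A \<le> y - A" using Jm[of A y] A0 yA by (simp add: y_def)
    moreover have "y \<le> A + (q - J A) / 2" by (simp add: y_def)
    ultimately have "J y \<le> J A + (q - J A) / 2" by linarith
    then have "J y < q" using e by (simp add: field_simps)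
    then have "y \<in> ?X" using yA A0 by (simp add: y_def)
    then have "y \<le> A" unfolding A_def using cSup_upper[OF _ bdd] by blast
    then show False using yA by simp
  qed
qed


lemma progress_M:
  fixes tau :: "real measure" and tn tn1 :: real
  assumes fin: "finite_measure tau" and sb: "sets tau = sets borel" and t: "tn \<le> tn1"
  defines "M \<equiv> measure tau {tn..tn1}"
  shows "measure (meas_diff tau (tau_trunc tau tn M)) {tn..tn1} = 0"
proof -
  interpret finite_measure tau by (rule fin)
  have M0: "0 \<le> M" by (simp add: M_def)
  have MM: "M \<le> measure tau {tn..tn1}" by (simp add: M_def)
  have ffm[measurable]: "ff tau tn M \<in> borel_measurable tau" by (rule ff_meas'[OF fin sb M0])
  have intf: "integrable tau (ff tau tn M)"
    apply (rule integrable_const_bound[where B=1])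
    subgoal using ff_nonneg[OF fin sb M0] ff_le1[OF fin sb M0] by auto
    subgoal by measurable
    done
  have [measurable]: "{tn..tn1} \<in> sets tau" by (simp add: sb)
  have intfi: "integrable tau (\<lambda>x. ff tau tn M x * indicator {tn..tn1} x)"
    apply (rule integrable_const_bound[where B=1])
    subgoal using ff_nonneg[OF fin sb M0] ff_le1[OF fin sb M0] by (auto simp: indicator_def)
    subgoal by measurable
    done
  have inti: "integrable tau (indicator {tn..tn1} :: real \<Rightarrow> real)"
    by (intro integrable_const_bound[where B=1]) (auto simp: sb)
  have "measure (meas_diff tau (tau_trunc tau tn M)) {tn..tn1}
      = integral\<^sup>L tau (\<lambda>x. (1 - ff tau tn M x) * indicator {tn..tn1} x)"
    unfolding meas_diff_dens[OF fin sb M0]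
    using ff_nonneg[OF fin sb M0] ff_le1[OF fin sb M0]
    by (intro dens_measure[OF fin sb]) auto
  also have "\<dots> = integral\<^sup>L tau (indicator {tn..tn1}) - integral\<^sup>L tau (\<lambda>x. ff tau tn M x * indicator {tn..tn1} x)"
    using inti intfi by (subst Bochner_Integration.integral_diff[symmetric]) (auto simp: algebra_simps)
  also have "integral\<^sup>L tau (\<lambda>x. ff tau tn M x * indicator {tn..tn1} x) = integral\<^sup>L tau (ff tau tn M)"
    apply (rule integral_cong_AE)
    subgoal by measurable
    subgoal by measurable
    subgoal using ff_supp[OF fin sb M0 t MM] by (auto simp: indicator_def elim!: AE_mp)
    done
  also have "\<dots> = M"
  proof (rule int_ff[OF fin sb M0])
    show "M \<le> measure tau {tn..}" unfolding M_def by (intro finite_measure_mono) (auto simp: sb)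
  qed
  also have "integral\<^sup>L tau (indicator {tn..tn1}) = M" by (simp add: M_def sp[OF fin sb])
  finally show ?thesis by simp
qed

lemma step_core:
  fixes tau :: "real measure" and t1 tn tn1 q1 q2 :: real
  assumes fin: "finite_measure tau" and sb: "sets tau = sets borel"
    and t: "t1 \<le> tn" "tn < tn1" and q: "0 < q1" "0 < q2"
  defines "J1 \<equiv> \<lambda>m. integral\<^sup>L (tau_trunc tau tn m) (\<lambda>t. (tn1 - t) / (tn1 - t1))"
    and "J2 \<equiv> \<lambda>m. integral\<^sup>L (tau_trunc tau tn m) (\<lambda>t. (t - t1) / (tn1 - t1))"
    and "M \<equiv> measure tau {tn..tn1}"
  defines "Mm \<equiv> min (Sup {m. 0 \<le> m \<and> m \<le> M \<and> J1 m < q1}) (Sup {m. 0 \<le> m \<and> m \<le> M \<and> J2 m < q2})"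
  shows "0 \<le> Mm" "0 \<le> q1 - J1 Mm" "0 \<le> q2 - J2 Mm"
    "measure (meas_diff tau (tau_trunc tau tn Mm)) {tn..tn1} = 0 \<or> q1 - J1 Mm = 0 \<or> q2 - J2 Mm = 0"
proof -
  have M0: "0 \<le> M" by (simp add: M_def)
  have tt: "tn \<le> tn1" using t by simp
  have d: "0 < tn1 - t1" using t by simp
  have a1: "0 \<le> (tn1 - x) / (tn1 - t1) \<and> (tn1 - x) / (tn1 - t1) \<le> 1" if "x \<in> {tn..tn1}" for x
    using that t d by (auto simp: divide_le_eq_1)
  have a2: "0 \<le> (x - t1) / (tn1 - t1) \<and> (x - t1) / (tn1 - t1) \<le> 1" if "x \<in> {tn..tn1}" for x
    using that t d by (auto simp: divide_le_eq_1)
  have m1: "(\<lambda>t. (tn1 - t) / (tn1 - t1)) \<in> borel_measurable borel" by measurable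
  have m2: "(\<lambda>t. (t - t1) / (tn1 - t1)) \<in> borel_measurable borel" by measurable
  have J1m: "J1 x \<le> J1 y \<and> J1 y - J1 x \<le> y - x" if "0 \<le> x" "x \<le> y" "y \<le> M" for x y
    unfolding J1_def using J_mono[OF fin sb m1 tt a1 that[unfolded M_def]] by simp
  have J2m: "J2 x \<le> J2 y \<and> J2 y - J2 x \<le> y - x" if "0 \<le> x" "x \<le> y" "y \<le> M" for x y
    unfolding J2_def using J_mono[OF fin sb m2 tt a2 that[unfolded M_def]] by simp
  have "J1 0 = 0" unfolding J1_def by (rule J_zero[OF fin sb m1 tt a1])
  then have J10: "J1 0 < q1" using q by simp
  have "J2 0 = 0" unfolding J2_def by (rule J_zero[OF fin sb m2 tt a2])
  then have J20: "J2 0 < q2" using q by simp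
  have J1m': "\<forall>x y. 0 \<le> x \<longrightarrow> x \<le> y \<longrightarrow> y \<le> M \<longrightarrow> J1 x \<le> J1 y \<and> J1 y - J1 x \<le> y - x"
    using J1m by blast
  have J2m': "\<forall>x y. 0 \<le> x \<longrightarrow> x \<le> y \<longrightarrow> y \<le> M \<longrightarrow> J2 x \<le> J2 y \<and> J2 y - J2 x \<le> y - x"
    using J2m by blast
  note S1 = sup_lemma[where J=J1 and q=q1 and M=M, OF M0 J10 J1m']
  note S2 = sup_lemma[where J=J2 and q=q2 and M=M, OF M0 J20 J2m']
  let ?M1 = "Sup {m. 0 \<le> m \<and> m \<le> M \<and> J1 m < q1}"
  let ?M2 = "Sup {m. 0 \<le> m \<and> m \<le> M \<and> J2 m < q2}"
  show Mm0: "0 \<le> Mm" unfolding Mm_def using S1(1) S2(1) by simp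
  show "0 \<le> q1 - J1 Mm" using S1(3)[OF Mm0] by (simp add: Mm_def)
  show "0 \<le> q2 - J2 Mm" using S2(3)[OF Mm0] by (simp add: Mm_def)
  show "measure (meas_diff tau (tau_trunc tau tn Mm)) {tn..tn1} = 0 \<or> q1 - J1 Mm = 0 \<or> q2 - J2 Mm = 0"
  proof (cases "Mm = M")
    case True
    then show ?thesis using progress_M[OF fin sb tt] unfolding M_def by simp
  next
    case False
    then have "Mm < M" unfolding Mm_def using S1(2) S2(2) by linarith
    then have "(Mm = ?M1 \<and> ?M1 < M) \<or> (Mm = ?M2 \<and> ?M2 < M)" unfolding Mm_def by linarith
    then show ?thesis using S1(4) S2(4) by auto
  qed
qed


lemma term_None: "feas_next s = None \<Longrightarrow> feas_terminates s"
  unfolding feas_terminates_def by (rule exI[of _ 1]) simp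

lemma term_Some: assumes "feas_next s = Some s'" "feas_terminates s'" shows "feas_terminates s"
proof -
  obtain k where k: "((\<lambda>x. Option.bind x feas_next) ^^ k) (Some s') = None"
    using assms(2) unfolding feas_terminates_def by blast
  have "((\<lambda>x. Option.bind x feas_next) ^^ Suc k) (Some s) = None"
    unfolding funpow_Suc_right o_apply using assms(1) k by simp
  then show ?thesis unfolding feas_terminates_def by blast
qed

lemma seg_borel[measurable]: "seg ts k \<in> sets borel"
  unfolding seg_def by simp

lemma cover:
  assumes ne: "ts \<noteq> []" and s: "sorted_wrt (<) ts" and x: "x \<in> {ts ! 0 .. last ts}"
  shows "\<exists>k. k < length ts \<and> (1 < length ts \<longrightarrow> Suc k < length ts) \<and> x \<in> seg ts k"
proof (cases "length ts = 1")
  case True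
  then show ?thesis using x by (auto simp: seg_def intro!: exI[of _ 0])
next
  case False
  then have L: "1 < length ts" using ne by (cases ts) auto
  define K where "K = {k. Suc k < length ts \<and> ts ! k \<le> x}"
  have fK: "finite K" unfolding K_def by (rule finite_subset[of _ "{..<length ts}"]) auto
  have zK: "0 \<in> K" unfolding K_def using L x by auto
  define k where "k = Max K"
  have kK: "k \<in> K" unfolding k_def using fK zK by (intro Max_in) auto
  then have k1: "Suc k < length ts" "ts ! k \<le> x" unfolding K_def by auto
  have "x \<le> ts ! Suc k"
  proof (cases "Suc (Suc k) < length ts")
    case True
    show ?thesis
    proof (rule ccontr)
      assume "\<not> x \<le> ts ! Suc k"
      then have "Suc k \<in> K" unfolding K_def using True by auto
      then have "Suc k \<le> k" unfolding k_def using fK by (intro Max_ge) auto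
      then show False by simp
    qed
  next
    case False
    then have "Suc k = length ts - 1" using k1 by simp
    then have "ts ! Suc k = last ts" using ne by (simp add: last_conv_nth)
    then show ?thesis using x by simp
  qed
  then show ?thesis using k1 L by (auto simp: seg_def intro!: exI[of _ k])
qed

lemma exists_pos_seg:
  fixes tau :: "real measure"
  assumes fin: "finite_measure tau" and sb: "sets tau = sets borel"
    and ne: "ts \<noteq> []" and s: "sorted_wrt (<) ts" and pos: "measure tau {ts ! 0 .. last ts} \<noteq> 0"
  shows "\<exists>k. k < length ts \<and> (1 < length ts \<longrightarrow> Suc k < length ts) \<and> 0 < measure tau (seg ts k)"
proof (rule ccontr)
  interpret finite_measure tau by (rule fin)
  assume H: "\<not> ?thesis"
  let ?I = "{k. k < length ts \<and> (1 < length ts \<longrightarrow> Suc k < length ts)}"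
  have fI: "finite ?I" by (rule finite_subset[of _ "{..<length ts}"]) auto
  have "{ts ! 0 .. last ts} \<subseteq> (\<Union>k\<in>?I. seg ts k)"
    using cover[OF ne s] by blast
  then have "measure tau {ts ! 0 .. last ts} \<le> measure tau (\<Union>k\<in>?I. seg ts k)"
    by (intro finite_measure_mono) (auto simp: sb)
  also have "\<dots> \<le> (\<Sum>k\<in>?I. measure tau (seg ts k))"
    using fI by (intro finite_measure_subadditive_finite) (auto simp: sb)
  also have "\<dots> = 0"
  proof (rule sum.neutral, rule ballI)
    fix k assume "k \<in> ?I"
    with H have "\<not> 0 < measure tau (seg ts k)" by auto
    then show "measure tau (seg ts k) = 0" using measure_nonneg[of tau "seg ts k"] by linarith
  qed
  finally show False using pos measure_nonneg[of tau "{ts ! 0 .. last ts}"] by linarith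
qed

lemma sorted_del_at: "sorted_wrt (<) xs \<Longrightarrow> sorted_wrt (<) (del_at k (xs :: real list))"
proof -
  assume s: "sorted_wrt (<) xs"
  have "sorted_wrt (<) (take (Suc k) xs @ drop (Suc k) xs)" using s by simp
  then have "\<forall>x\<in>set (take (Suc k) xs). \<forall>y\<in>set (drop (Suc k) xs). x < y"
    by (simp only: sorted_wrt_append) blast
  moreover have "set (take k xs) \<subseteq> set (take (Suc k) xs)" by (rule set_take_subset_set_take) simp
  ultimately show ?thesis unfolding del_at_def using s
    by (auto simp: sorted_wrt_append sorted_wrt_take sorted_wrt_drop)
qed

lemma set_del_at: "set (del_at k xs) \<subseteq> set xs"
  unfolding del_at_def using set_take_subset set_drop_subset by fastforce

lemma length_del_at: "k < length xs \<Longrightarrow> length (del_at k xs) = length xs - 1"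
  unfolding del_at_def by simp

definition InvS :: "feas_state \<Rightarrow> bool" where
  "InvS s = (case s of (qs, ts, tau) \<Rightarrow> length qs = length ts \<and> sorted_wrt (<) ts \<and>
     (\<forall>q\<in>set qs. 0 \<le> q) \<and> finite_measure tau \<and> sets tau = sets borel)"

lemma dens_le:
  fixes tau :: "real measure"
  assumes fin: "finite_measure tau" and sb: "sets tau = sets borel"
    and g[measurable]: "g \<in> borel_measurable tau" and g0: "\<And>x. 0 \<le> g x" and g1: "\<And>x. g x \<le> 1"
    and A[measurable]: "A \<in> sets borel"
  shows "measure (density tau (\<lambda>x. ennreal (g x))) A \<le> measure tau A"
proof -
  interpret finite_measure tau by (rule fin)
  have [measurable]: "A \<in> sets tau" using A sb by simp
  have "measure (density tau (\<lambda>x. ennreal (g x))) A = integral\<^sup>L tau (\<lambda>x. g x * indicator A x)"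
    by (rule dens_measure[OF fin sb g g0 g1 A])
  also have "\<dots> \<le> integral\<^sup>L tau (indicator A)"
    using g0 g1 by (intro integral_mono integrable_const_bound[where B=1]) (auto simp: sb indicator_def)
  also have "\<dots> = measure tau A" by (simp add: sp[OF fin sb])
  finally show ?thesis .
qed


lemma step_cases:
  assumes inv: "InvS (qs, ts, tau)" and nx: "feas_next (qs, ts, tau) = Some s'"
  shows "(InvS s' \<and> length (fst (snd s')) < length ts) \<or>
    (\<exists>n qs' tau'. n = (LEAST k. k < length ts \<and> measure tau (seg ts k) > 0) \<and> Suc n < length ts \<and>
       measure tau (seg ts n) > 0 \<and> (\<forall>k<n. measure tau (seg ts k) = 0) \<and>
       qs ! 0 \<noteq> 0 \<and> qs ! Suc n \<noteq> 0 \<and> s' = (qs', ts, tau') \<and> InvS s' \<and>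
       (\<forall>A\<in>sets borel. measure tau' A \<le> measure tau A) \<and>
       (measure tau' (seg ts n) = 0 \<or> qs' ! 0 = 0 \<or> qs' ! Suc n = 0))"
proof -
  from inv have L: "length qs = length ts" and so: "sorted_wrt (<) ts" and nn: "\<forall>q\<in>set qs. 0 \<le> q"
    and fin: "finite_measure tau" and sb: "sets tau = sets borel" by (auto simp: InvS_def)
  have c1: "\<not> emeasure tau {..< ts ! 0} > 0"
  proof
    assume "emeasure tau {..< ts ! 0} > 0"
    then have "feas_next (qs, ts, tau) = None" by (simp add: feas_next_def)
    with nx show False by simp
  qed
  have ne: "ts \<noteq> []"
  proof
    assume "ts = []"
    then have "feas_next (qs, ts, tau) = None" by (simp add: feas_next_def)
    with nx show False by simp
  qed
  have pos: "measure tau {ts ! 0 .. last ts} \<noteq> 0"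
  proof
    assume "measure tau {ts ! 0 .. last ts} = 0"
    then have "feas_next (qs, ts, tau) = None" using c1 ne by (simp add: feas_next_def)
    with nx show False by simp
  qed
  obtain w where w: "w < length ts" "1 < length ts \<longrightarrow> Suc w < length ts" "0 < measure tau (seg ts w)"
    using exists_pos_seg[OF fin sb ne so pos] by blast
  define n where "n = (LEAST k. k < length ts \<and> 0 < measure tau (seg ts k))"
  have nP: "n < length ts" "0 < measure tau (seg ts n)"
    using LeastI[of "\<lambda>k. k < length ts \<and> 0 < measure tau (seg ts k)" w] w unfolding n_def by auto
  have "n \<le> w" unfolding n_def using w by (intro Least_le) auto
  then have nL: "1 < length ts \<longrightarrow> Suc n < length ts" using w by auto
  have nlt: "\<forall>k<n. measure tau (seg ts k) = 0"
  proof (intro allI impI)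
    fix k assume "k < n"
    then have "\<not> (k < length ts \<and> 0 < measure tau (seg ts k))"
      unfolding n_def by (rule not_less_Least)
    then show "measure tau (seg ts k) = 0" using \<open>k < n\<close> nP(1) measure_nonneg[of tau "seg ts k"] by auto
  qed
  have nx2: "(let n = (LEAST k. k < length ts \<and> measure tau (seg ts k) > 0) in
        if qs ! 0 = 0 then Some (tl qs, tl ts, tau)
        else if (if Suc n < length ts then qs ! Suc n else 0) = 0 \<and> length ts > 1
          then Some (del_at (Suc n) qs, del_at (Suc n) ts, tau)
        else if Suc n < length ts then
          (let t1 = ts ! 0; tn = ts ! n; tn1 = ts ! Suc n;
               a1 = (\<lambda>t. (tn1 - t) / (tn1 - t1));
               an1 = (\<lambda>t. (t - t1) / (tn1 - t1));
               J1 = (\<lambda>m. integral\<^sup>L (tau_trunc tau tn m) a1);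
               Jn1 = (\<lambda>m. integral\<^sup>L (tau_trunc tau tn m) an1);
               M = measure tau {tn .. tn1};
               M1 = Sup {m. 0 \<le> m \<and> m \<le> M \<and> J1 m < qs ! 0};
               Mn1 = Sup {m. 0 \<le> m \<and> m \<le> M \<and> Jn1 m < qs ! Suc n};
               Mmin = min M1 Mn1
           in Some (qs[0 := qs ! 0 - J1 Mmin, Suc n := qs ! Suc n - Jn1 Mmin],
                    ts, meas_diff tau (tau_trunc tau tn Mmin)))
        else None) = Some s'"
  proof -
    have c1': "(emeasure tau {..< ts ! 0} > 0) = False" using c1 by simp
    have ne': "(ts = []) = False" using ne by simp
    have pos': "(measure tau {ts ! 0 .. last ts} = 0) = False" using pos by simp
    show ?thesis using nx by (simp only: feas_next_def prod.case c1' ne' pos' if_False)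
  qed
  then have nx3: "(if qs ! 0 = 0 then Some (tl qs, tl ts, tau)
        else if (if Suc n < length ts then qs ! Suc n else 0) = 0 \<and> length ts > 1
          then Some (del_at (Suc n) qs, del_at (Suc n) ts, tau)
        else if Suc n < length ts then
          (let t1 = ts ! 0; tn = ts ! n; tn1 = ts ! Suc n;
               a1 = (\<lambda>t. (tn1 - t) / (tn1 - t1));
               an1 = (\<lambda>t. (t - t1) / (tn1 - t1));
               J1 = (\<lambda>m. integral\<^sup>L (tau_trunc tau tn m) a1);
               Jn1 = (\<lambda>m. integral\<^sup>L (tau_trunc tau tn m) an1);
               M = measure tau {tn .. tn1};
               M1 = Sup {m. 0 \<le> m \<and> m \<le> M \<and> J1 m < qs ! 0};
               Mn1 = Sup {m. 0 \<le> m \<and> m \<le> M \<and> Jn1 m < qs ! Suc n};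
               Mmin = min M1 Mn1
           in Some (qs[0 := qs ! 0 - J1 Mmin, Suc n := qs ! Suc n - Jn1 Mmin],
                    ts, meas_diff tau (tau_trunc tau tn Mmin)))
        else None) = Some s'"
    unfolding n_def by (simp only: Let_def)
  show ?thesis
  proof (cases "qs ! 0 = 0")
    case True
    then have "s' = (tl qs, tl ts, tau)" using nx3 by simp
    moreover have "InvS (tl qs, tl ts, tau)"
      using L so nn fin sb by (cases qs; cases ts) (auto simp: InvS_def)
    ultimately show ?thesis using ne by auto
  next
    case q0: False
    show ?thesis
    proof (cases "(if Suc n < length ts then qs ! Suc n else 0) = 0 \<and> length ts > 1")
      case True
      then have sn: "Suc n < length ts" using nL by auto
      have "s' = (del_at (Suc n) qs, del_at (Suc n) ts, tau)" using nx3 q0 True by simp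
      moreover have "InvS (del_at (Suc n) qs, del_at (Suc n) ts, tau)"
        using L so nn fin sb sn sorted_del_at[OF so] set_del_at[of "Suc n" qs]
        by (auto simp: InvS_def length_del_at)
      ultimately show ?thesis using sn by (auto simp: length_del_at)
    next
      case c2: False
      have sn: "Suc n < length ts"
      proof (rule ccontr)
        assume "\<not> Suc n < length ts"
        then have "None = Some s'" using nx3 q0 c2 by simp
        then show False by simp
      qed
      have qn: "qs ! Suc n \<noteq> 0" using c2 sn by auto
      have q1p: "0 < qs ! 0" using q0 nn ne L by (cases qs) auto
      have q2p: "0 < qs ! Suc n" using qn nn sn L nth_mem[of "Suc n" qs] by fastforce
      have tt1: "ts ! 0 \<le> ts ! n"
        using sorted_wrt_nth_less[OF so, of 0 n] nP(1) by (cases n) auto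
      have tt2: "ts ! n < ts ! Suc n"
        using so sn by (auto simp: sorted_wrt_iff_nth_less)
      define J1 where "J1 = (\<lambda>m. integral\<^sup>L (tau_trunc tau (ts ! n) m) (\<lambda>t. (ts ! Suc n - t) / (ts ! Suc n - ts ! 0)))"
      define J2 where "J2 = (\<lambda>m. integral\<^sup>L (tau_trunc tau (ts ! n) m) (\<lambda>t. (t - ts ! 0) / (ts ! Suc n - ts ! 0)))"
      define M where "M = measure tau {ts ! n .. ts ! Suc n}"
      define Mm where "Mm = min (Sup {m. 0 \<le> m \<and> m \<le> M \<and> J1 m < qs ! 0}) (Sup {m. 0 \<le> m \<and> m \<le> M \<and> J2 m < qs ! Suc n})"
      note SC0 = step_core[OF fin sb tt1 tt2 q1p q2p]
      have SC: "0 \<le> Mm" "0 \<le> qs ! 0 - J1 Mm" "0 \<le> qs ! Suc n - J2 Mm"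
        "measure (meas_diff tau (tau_trunc tau (ts ! n) Mm)) {ts ! n..ts ! Suc n} = 0 \<or> qs ! 0 - J1 Mm = 0 \<or> qs ! Suc n - J2 Mm = 0"
        using SC0 unfolding Mm_def M_def J1_def J2_def by auto
      define qs' where "qs' = qs[0 := qs ! 0 - J1 Mm, Suc n := qs ! Suc n - J2 Mm]"
      define tau' where "tau' = meas_diff tau (tau_trunc tau (ts ! n) Mm)"
      have q0': "(qs ! 0 = 0) = False" using q0 by simp
      have c2': "((if Suc n < length ts then qs ! Suc n else 0) = 0 \<and> length ts > 1) = False" using c2 by simp
      have sn': "(Suc n < length ts) = True" using sn by simp
      have c2'': "(qs ! Suc n = 0 \<and> 1 < length ts) = False" using qn by simp
      from nx3 have "Some (qs', ts, tau') = Some s'"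
        unfolding qs'_def tau'_def Mm_def M_def J1_def J2_def
        by (simp only: q0' c2' c2'' sn' if_False if_True Let_def)
      then have s'eq: "s' = (qs', ts, tau')" by simp
      have tau'd: "tau' = density tau (\<lambda>x. ennreal (1 - ff tau (ts ! n) Mm x))"
        unfolding tau'_def by (rule meas_diff_dens[OF fin sb SC(1)])
      have gm: "(\<lambda>x. 1 - ff tau (ts ! n) Mm x) \<in> borel_measurable tau"
        using ff_meas'[OF fin sb SC(1)] by measurable
      have g0: "0 \<le> 1 - ff tau (ts ! n) Mm x" for x using ff_le1[OF fin sb SC(1)] by simp
      have g1: "1 - ff tau (ts ! n) Mm x \<le> 1" for x using ff_nonneg[OF fin sb SC(1)] by simp
      have fin': "finite_measure tau'" unfolding tau'd by (rule dens_finite[OF fin sb gm g0 g1])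
      have sb': "sets tau' = sets borel" unfolding tau'd by (simp add: sb)
      have le': "\<forall>A\<in>sets borel. measure tau' A \<le> measure tau A"
        unfolding tau'd using dens_le[OF fin sb gm g0 g1] by blast
      have nn': "\<forall>q\<in>set qs'. 0 \<le> q"
      proof
        fix q assume "q \<in> set qs'"
        then have "q \<in> insert (qs ! Suc n - J2 Mm) (set (qs[0 := qs ! 0 - J1 Mm]))"
          unfolding qs'_def using set_update_subset_insert by fastforce
        then have "q \<in> insert (qs ! Suc n - J2 Mm) (insert (qs ! 0 - J1 Mm) (set qs))"
          using set_update_subset_insert by fastforce
        then show "0 \<le> q" using nn SC(2,3) by auto
      qed
      have inv': "InvS s'" unfolding s'eq InvS_def using L so nn' fin' sb' by (simp add: qs'_def)
      have segn: "seg ts n = {ts ! n .. ts ! Suc n}" using sn by (simp add: seg_def)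
      have l0: "0 < length qs" using sn L by linarith
      have q'0: "qs' ! 0 = qs ! 0 - J1 Mm" using l0 by (simp add: qs'_def)
      have q'n: "qs' ! Suc n = qs ! Suc n - J2 Mm" using sn L by (simp add: qs'_def)
      have prog: "measure tau' (seg ts n) = 0 \<or> qs' ! 0 = 0 \<or> qs' ! Suc n = 0"
        using SC(4) unfolding segn q'0 q'n tau'_def .
      have nd: "n = (LEAST k. k < length ts \<and> measure tau (seg ts k) > 0)" by (rule n_def)
      show ?thesis
        apply (rule disjI2)
        apply (rule exI[of _ n], rule exI[of _ qs'], rule exI[of _ tau'])
        apply (intro conjI)
        apply (rule nd)
        apply (rule sn)
        apply (rule nP(2))
        apply (rule nlt)
        apply (rule q0)
        apply (rule qn)
        apply (rule s'eq)
        apply (rule inv')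
        apply (rule le')
        apply (rule prog)
        done
    qed
  qed
qed


lemma main_ind:
  "\<forall>qs ts tau d. length ts = L \<longrightarrow> InvS (qs, ts, tau) \<longrightarrow>
     (\<forall>k < L - d. measure tau (seg ts k) = 0) \<longrightarrow> feas_terminates (qs, ts, tau)"
proof (induction L rule: less_induct)
  case (less L)
  have outer: "feas_terminates s" if "InvS s" "length (fst (snd s)) < L" for s
  proof -
    obtain qs ts tau where s: "s = (qs, ts, tau)" by (cases s)
    show ?thesis using less[rule_format, of "length ts" ts qs tau "length ts"] that s by simp
  qed
  have "feas_terminates (qs, ts, tau)"
    if "length ts = L" "InvS (qs, ts, tau)" "\<forall>k < L - d. measure tau (seg ts k) = 0" for d qs ts tau
    using that
  proof (induction d arbitrary: qs ts tau rule: less_induct)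
    case (less d)
    show ?case
    proof (cases "feas_next (qs, ts, tau)")
      case None then show ?thesis by (rule term_None)
    next
      case (Some s')
      from step_cases[OF less.prems(2) Some] show ?thesis
      proof
        assume "InvS s' \<and> length (fst (snd s')) < length ts"
        then show ?thesis using outer less.prems(1) term_Some[OF Some] by auto
      next
        assume "\<exists>n qs' tau'. n = (LEAST k. k < length ts \<and> measure tau (seg ts k) > 0) \<and> Suc n < length ts \<and>
       measure tau (seg ts n) > 0 \<and> (\<forall>k<n. measure tau (seg ts k) = 0) \<and>
       qs ! 0 \<noteq> 0 \<and> qs ! Suc n \<noteq> 0 \<and> s' = (qs', ts, tau') \<and> InvS s' \<and>
       (\<forall>A\<in>sets borel. measure tau' A \<le> measure tau A) \<and>
       (measure tau' (seg ts n) = 0 \<or> qs' ! 0 = 0 \<or> qs' ! Suc n = 0)"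
        then obtain n qs' tau' where n: "n = (LEAST k. k < length ts \<and> 0 < measure tau (seg ts k))"
          and sn: "Suc n < length ts" and pn: "0 < measure tau (seg ts n)"
          and lt: "\<forall>k<n. measure tau (seg ts k) = 0" and q0: "qs ! 0 \<noteq> 0" and qn: "qs ! Suc n \<noteq> 0"
          and s'eq: "s' = (qs', ts, tau')" and inv': "InvS s'"
          and le: "\<forall>A\<in>sets borel. measure tau' A \<le> measure tau A"
          and prog: "measure tau' (seg ts n) = 0 \<or> qs' ! 0 = 0 \<or> qs' ! Suc n = 0"
          by blast
        have nd: "L - d \<le> n"
        proof (rule ccontr)
          assume "\<not> L - d \<le> n"
          then have "measure tau (seg ts n) = 0" using less.prems(3) by auto
          then show False using pn by simp
        qed
        have z': "measure tau' (seg ts k) = 0" if "k < n" for k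
          using le lt that measure_nonneg[of tau' "seg ts k"] seg_borel[of ts k]
          by (metis order_antisym)
        show ?thesis
        proof (cases "measure tau' (seg ts n) = 0")
          case True
          have d1: "d - 1 < d" using nd sn less.prems(1) by linarith
          have "feas_terminates (qs', ts, tau')"
          proof (rule less.IH[OF d1])
            show "length ts = L" by (rule less.prems(1))
            show "InvS (qs', ts, tau')" using inv' s'eq by simp
            show "\<forall>k<L - (d - 1). measure tau' (seg ts k) = 0"
            proof (intro allI impI)
              fix k assume "k < L - (d - 1)"
              then have "k \<le> n" using nd sn less.prems(1) by linarith
              then show "measure tau' (seg ts k) = 0" using True z' by (cases "k = n") auto
            qed
          qed
          then show ?thesis using term_Some[OF Some] s'eq by simp
        next
          case False
          then have pos': "0 < measure tau' (seg ts n)" using measure_nonneg[of tau' "seg ts n"] by linarith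
          have qz: "qs' ! 0 = 0 \<or> qs' ! Suc n = 0" using prog False by simp
          have n': "(LEAST k. k < length ts \<and> 0 < measure tau' (seg ts k)) = n"
          proof (rule Least_equality)
            show "n < length ts \<and> 0 < measure tau' (seg ts n)" using sn pos' by simp
            fix y assume "y < length ts \<and> 0 < measure tau' (seg ts y)"
            then show "n \<le> y" using z'[of y] by (cases "y < n") auto
          qed
          have "feas_terminates s'"
          proof (cases "feas_next s'")
            case None then show ?thesis by (rule term_None)
          next
            case (Some s'')
            from step_cases[OF inv'[unfolded s'eq] Some[unfolded s'eq]] show ?thesis
            proof
              assume "InvS s'' \<and> length (fst (snd s'')) < length ts"
              then show ?thesis using outer less.prems(1) term_Some[OF Some] by auto
            next
              assume "\<exists>n2 qs2 tau2. n2 = (LEAST k. k < length ts \<and> measure tau' (seg ts k) > 0) \<and> Suc n2 < length ts \<and>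
       measure tau' (seg ts n2) > 0 \<and> (\<forall>k<n2. measure tau' (seg ts k) = 0) \<and>
       qs' ! 0 \<noteq> 0 \<and> qs' ! Suc n2 \<noteq> 0 \<and> s'' = (qs2, ts, tau2) \<and> InvS s'' \<and>
       (\<forall>A\<in>sets borel. measure tau2 A \<le> measure tau' A) \<and>
       (measure tau2 (seg ts n2) = 0 \<or> qs2 ! 0 = 0 \<or> qs2 ! Suc n2 = 0)"
              then obtain n2 where "n2 = (LEAST k. k < length ts \<and> 0 < measure tau' (seg ts k))"
                and "qs' ! 0 \<noteq> 0" "qs' ! Suc n2 \<noteq> 0" by blast
              then show ?thesis using n' qz by simp
            qed
          qed
          then show ?thesis using term_Some[OF Some] by simp
        qed
      qed
    qed
  qed
  then show ?case by blast
qed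

theorem proposition3:
  fixes qs ts :: "real list" and Di :: "'a measure" and T :: "'a \<Rightarrow> real"
  assumes "length qs = length ts"
    and "sorted_wrt (<) ts"
    and "\<forall>q\<in>set qs. 0 \<le> q"
    and "emeasure Di (space Di) = ennreal (\<Sum>k<length qs. qs ! k)"
    and "T \<in> borel_measurable Di"
    and "\<forall>i\<in>space Di. T i \<in> {ts ! 0 .. last ts}"
    and "integral\<^sup>L Di T = (\<Sum>k<length qs. qs ! k * ts ! k)"
  shows "feas_terminates (qs, ts, distr Di borel T)"
proof -
  have fin: "finite_measure (distr Di borel T)"
  proof (rule finite_measureI)
    have "emeasure (distr Di borel T) (space (distr Di borel T)) = emeasure Di (T -` UNIV \<inter> space Di)"
      using assms(5) by (simp add: emeasure_distr)
    also have "\<dots> = emeasure Di (space Di)" by simp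
    finally show "emeasure (distr Di borel T) (space (distr Di borel T)) \<noteq> \<infinity>"
      using assms(4) by simp
  qed
  have inv: "InvS (qs, ts, distr Di borel T)"
    unfolding InvS_def using assms(1-3) fin by simp
  show ?thesis using main_ind[rule_format, OF refl inv, of "length ts"] by simp
qed

end
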